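(* Let $\mathbf A$ be a finite subdirectly irreducible cBCK-algebra and let $\mathbf B$ be a subalgebra of $\mathbf A$. If there exist $a,b\in B$ such that $\gcd(\mathrm{h}_A(a),\mathrm{h}_A(b))=1$, then the universe $B$ is a downset of $\mathbf A$ (i.e., $x\in B$ and $y\le x$ in $\mathbf A$ imply $y\in B$).
   Context: A BCK-algebra is an algebra $(A,\ominus,0)$ of type $(2,0)$ satisfying $((x\ominus y)\ominus(x\ominus z))\ominus(z\ominus y)=0$, $x\ominus 0=x$, $0\ominus x=0$, and ($x\ominus y=0$ and $y\ominus x=0$ imply $x=y$); it is ordered by $x\le y$ iff $x\ominus y=0$. A cBCK-algebra is a BCK-algebra satisfying $x\ominus(x\ominus y)=y\ominus(y\ominus x)$; its order is a meet-semilattice with $x\wedge y=x\ominus(x\ominus y)$. Finite subdirectly irreducible cBCK-algebras are, as posets, rooted trees with root $0$ (with a unique atom if nontrivial). For $a\in A$, $\mathrm{h}_A(a)=|[0,a]|-1$ is the height of $a$ in $\mathbf A$. *)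

theory Defs
  imports Main
begin

definition BCK_algebra :: "'a set \<Rightarrow> ('a \<Rightarrow> 'a \<Rightarrow> 'a) \<Rightarrow> 'a \<Rightarrow> bool" where
  "BCK_algebra A m z \<longleftrightarrow>
     z \<in> A \<and> (\<forall>x\<in>A. \<forall>y\<in>A. m x y \<in> A) \<and>
     (\<forall>x\<in>A. \<forall>y\<in>A. \<forall>u\<in>A. m (m (m x y) (m x u)) (m u y) = z) \<and>
     (\<forall>x\<in>A. m x z = x) \<and>
     (\<forall>x\<in>A. m z x = z) \<and>
     (\<forall>x\<in>A. \<forall>y\<in>A. m x y = z \<and> m y x = z \<longrightarrow> x = y)"

definition cBCK_algebra :: "'a set \<Rightarrow> ('a \<Rightarrow> 'a \<Rightarrow> 'a) \<Rightarrow> 'a \<Rightarrow> bool" where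
  "cBCK_algebra A m z \<longleftrightarrow> BCK_algebra A m z \<and>
     (\<forall>x\<in>A. \<forall>y\<in>A. m x (m x y) = m y (m y x))"

definition bck_le :: "('a \<Rightarrow> 'a \<Rightarrow> 'a) \<Rightarrow> 'a \<Rightarrow> 'a \<Rightarrow> 'a \<Rightarrow> bool" where
  "bck_le m z x y \<longleftrightarrow> m x y = z"

definition congruence :: "'a set \<Rightarrow> ('a \<Rightarrow> 'a \<Rightarrow> 'a) \<Rightarrow> ('a \<times> 'a) set \<Rightarrow> bool" where
  "congruence A m \<theta> \<longleftrightarrow> equiv A \<theta> \<and>
     (\<forall>x1 y1 x2 y2. (x1, y1) \<in> \<theta> \<and> (x2, y2) \<in> \<theta> \<longrightarrow> (m x1 x2, m y1 y2) \<in> \<theta>)"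

definition subdirectly_irreducible :: "'a set \<Rightarrow> ('a \<Rightarrow> 'a \<Rightarrow> 'a) \<Rightarrow> bool" where
  "subdirectly_irreducible A m \<longleftrightarrow>
     (\<exists>x\<in>A. \<exists>y\<in>A. x \<noteq> y) \<and>
     (\<exists>\<mu>. congruence A m \<mu> \<and> \<mu> \<noteq> Id_on A \<and>
        (\<forall>\<theta>. congruence A m \<theta> \<and> \<theta> \<noteq> Id_on A \<longrightarrow> \<mu> \<subseteq> \<theta>))"

definition subalgebra :: "'a set \<Rightarrow> 'a set \<Rightarrow> ('a \<Rightarrow> 'a \<Rightarrow> 'a) \<Rightarrow> 'a \<Rightarrow> bool" where
  "subalgebra B A m z \<longleftrightarrow> B \<subseteq> A \<and> z \<in> B \<and> (\<forall>x\<in>B. \<forall>y\<in>B. m x y \<in> B)"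

definition height :: "'a set \<Rightarrow> ('a \<Rightarrow> 'a \<Rightarrow> 'a) \<Rightarrow> 'a \<Rightarrow> 'a \<Rightarrow> nat" where
  "height A m z a = card {x \<in> A. bck_le m z z x \<and> bck_le m z x a} - 1"

definition downset :: "'a set \<Rightarrow> 'a set \<Rightarrow> ('a \<Rightarrow> 'a \<Rightarrow> 'a) \<Rightarrow> 'a \<Rightarrow> bool" where
  "downset B A m z \<longleftrightarrow> (\<forall>x\<in>B. \<forall>y\<in>A. bck_le m z y x \<longrightarrow> y \<in> B)"

end

theory Submission
  imports Defs
begin

locale cbck =
  fixes A :: "'a set" and m :: "'a \<Rightarrow> 'a \<Rightarrow> 'a" (infixl "\<ominus>" 65) and z :: 'a
  assumes cb: "cBCK_algebra A m z"
begin

abbreviation le (infix "\<preceq>" 50) where "x \<preceq> y \<equiv> x \<ominus> y = z"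

lemma z_in[simp]: "z \<in> A" using cb unfolding cBCK_algebra_def BCK_algebra_def by blast
lemma cl[simp]: "x\<in>A \<Longrightarrow> y\<in>A \<Longrightarrow> x \<ominus> y \<in> A" using cb unfolding cBCK_algebra_def BCK_algebra_def by blast
lemma B1: "x\<in>A \<Longrightarrow> y\<in>A \<Longrightarrow> u\<in>A \<Longrightarrow> ((x\<ominus>y)\<ominus>(x\<ominus>u))\<ominus>(u\<ominus>y) = z"
  using cb unfolding cBCK_algebra_def BCK_algebra_def by blast
lemma B2[simp]: "x\<in>A \<Longrightarrow> x \<ominus> z = x" using cb unfolding cBCK_algebra_def BCK_algebra_def by blast
lemma B3[simp]: "x\<in>A \<Longrightarrow> z \<ominus> x = z" using cb unfolding cBCK_algebra_def BCK_algebra_def by blast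
lemma B4: "x\<in>A \<Longrightarrow> y\<in>A \<Longrightarrow> x \<preceq> y \<Longrightarrow> y \<preceq> x \<Longrightarrow> x = y"
  using cb unfolding cBCK_algebra_def BCK_algebra_def by blast
lemma comm: "x\<in>A \<Longrightarrow> y\<in>A \<Longrightarrow> x\<ominus>(x\<ominus>y) = y\<ominus>(y\<ominus>x)"
  using cb unfolding cBCK_algebra_def by blast

lemma self[simp]: "x\<in>A \<Longrightarrow> x \<ominus> x = z"
  using B1[of x z z] by simp
lemma sub_le: "x\<in>A \<Longrightarrow> y\<in>A \<Longrightarrow> x \<ominus> y \<preceq> x"
  using B1[of x y z] by simp
lemma trans_le: "x\<in>A \<Longrightarrow> y\<in>A \<Longrightarrow> u\<in>A \<Longrightarrow> x \<preceq> y \<Longrightarrow> y \<preceq> u \<Longrightarrow> x \<preceq> u"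
  using B1[of x u y] by simp
lemma mono1: "x\<in>A \<Longrightarrow> y\<in>A \<Longrightarrow> u\<in>A \<Longrightarrow> x \<preceq> y \<Longrightarrow> (x \<ominus> u) \<preceq> (y \<ominus> u)"
  using B1[of x u y] by simp
lemma anti2: "x\<in>A \<Longrightarrow> y\<in>A \<Longrightarrow> u\<in>A \<Longrightarrow> x \<preceq> y \<Longrightarrow> (u \<ominus> y) \<preceq> (u \<ominus> x)"
  using B1[of u y x] by simp
lemma mi: "x\<in>A \<Longrightarrow> y\<in>A \<Longrightarrow> x \<ominus> (x \<ominus> y) \<preceq> y"
  using B1[of x z y] by simp
lemma le_z: "x\<in>A \<Longrightarrow> x \<preceq> z \<Longrightarrow> x = z" by simp
lemma z_le: "x\<in>A \<Longrightarrow> z \<preceq> x" by simp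

lemma exch_le: "x\<in>A \<Longrightarrow> y\<in>A \<Longrightarrow> u\<in>A \<Longrightarrow> (x\<ominus>y)\<ominus>u \<preceq> (x\<ominus>u)\<ominus>y"
proof -
  assume a: "x\<in>A" "y\<in>A" "u\<in>A"
  have 1: "(x\<ominus>y)\<ominus>u \<preceq> (x\<ominus>y)\<ominus>(x\<ominus>(x\<ominus>u))"
    using anti2[OF _ _ _ mi[of x u]] a by simp
  have 2: "(x\<ominus>y)\<ominus>(x\<ominus>(x\<ominus>u)) \<preceq> (x\<ominus>u)\<ominus>y" using B1[of x y "x\<ominus>u"] a by simp
  show ?thesis using trans_le[OF _ _ _ 1 2] a by simp
qed
lemma exch: "x\<in>A \<Longrightarrow> y\<in>A \<Longrightarrow> u\<in>A \<Longrightarrow> (x\<ominus>y)\<ominus>u = (x\<ominus>u)\<ominus>y"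
  using B4 exch_le by simp
lemma subsub: "x\<in>A \<Longrightarrow> y\<in>A \<Longrightarrow> u\<in>A \<Longrightarrow> (x\<ominus>u)\<ominus>(y\<ominus>u) \<preceq> x \<ominus> y"
  using exch[of "x\<ominus>u" "y\<ominus>u" "x\<ominus>y"] B1[of x u y] by simp

definition meet where "meet x y = x \<ominus> (x \<ominus> y)"
lemma meet_in[simp]: "x\<in>A \<Longrightarrow> y\<in>A \<Longrightarrow> meet x y \<in> A" unfolding meet_def by simp
lemma meet_le1: "x\<in>A \<Longrightarrow> y\<in>A \<Longrightarrow> meet x y \<preceq> x" unfolding meet_def using sub_le by simp
lemma meet_le2: "x\<in>A \<Longrightarrow> y\<in>A \<Longrightarrow> meet x y \<preceq> y" unfolding meet_def using mi by simp
lemma meet_comm: "x\<in>A \<Longrightarrow> y\<in>A \<Longrightarrow> meet x y = meet y x" unfolding meet_def using comm by simp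
lemma meet_of_le: "x\<in>A \<Longrightarrow> y\<in>A \<Longrightarrow> x \<preceq> y \<Longrightarrow> meet x y = x" unfolding meet_def by simp
lemma meet_glb: "x\<in>A \<Longrightarrow> y\<in>A \<Longrightarrow> w\<in>A \<Longrightarrow> w \<preceq> x \<Longrightarrow> w \<preceq> y \<Longrightarrow> w \<preceq> meet x y"
proof -
  assume a: "x\<in>A" "y\<in>A" "w\<in>A" "w \<preceq> x" "w \<preceq> y"
  have "x \<ominus> y \<preceq> x \<ominus> w" using anti2 a by simp
  hence "x \<ominus> (x \<ominus> w) \<preceq> x \<ominus> (x \<ominus> y)" using anti2 a by simp
  moreover have "x \<ominus> (x \<ominus> w) = w" using comm[of x w] a by simp
  ultimately show ?thesis unfolding meet_def by simp
qed

definition ideal where "ideal I \<longleftrightarrow> I \<subseteq> A \<and> z \<in> I \<and> (\<forall>x\<in>A. \<forall>y\<in>A. x \<ominus> y \<in> I \<longrightarrow> y \<in> I \<longrightarrow> x \<in> I)"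
lemma ideal_A: "ideal I \<Longrightarrow> x\<in>I \<Longrightarrow> x \<in> A" unfolding ideal_def by blast
lemma ideal_z: "ideal I \<Longrightarrow> z \<in> I" unfolding ideal_def by blast
lemma ideal_cl: "ideal I \<Longrightarrow> x\<in>A \<Longrightarrow> y\<in>A \<Longrightarrow> x \<ominus> y \<in> I \<Longrightarrow> y \<in> I \<Longrightarrow> x \<in> I"
  unfolding ideal_def by blast
lemma ideal_down: "ideal I \<Longrightarrow> x\<in>A \<Longrightarrow> y\<in>I \<Longrightarrow> x \<preceq> y \<Longrightarrow> x \<in> I"
  using ideal_cl[of I x y] ideal_z[of I] ideal_A[of I y] by simp

definition theta where "theta I = {(x,y). x\<in>A \<and> y\<in>A \<and> x\<ominus>y \<in> I \<and> y\<ominus>x \<in> I}"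

lemma theta_trans: "ideal I \<Longrightarrow> (x,y) \<in> theta I \<Longrightarrow> (y,u) \<in> theta I \<Longrightarrow> (x,u) \<in> theta I"
proof -
  assume I: "ideal I" and h: "(x,y) \<in> theta I" "(y,u) \<in> theta I"
  hence a: "x\<in>A" "y\<in>A" "u\<in>A" "x\<ominus>y\<in>I" "y\<ominus>x\<in>I" "y\<ominus>u\<in>I" "u\<ominus>y\<in>I" unfolding theta_def by auto
  have "(x\<ominus>u)\<ominus>(x\<ominus>y) \<in> I" using ideal_down[OF I _ a(6)] B1[of x u y] a by simp
  hence 1: "x\<ominus>u \<in> I" using ideal_cl[OF I _ _ _ a(4)] a by simp
  have "(u\<ominus>x)\<ominus>(u\<ominus>y) \<in> I" using ideal_down[OF I _ a(5)] B1[of u x y] a by simp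
  hence 2: "u\<ominus>x \<in> I" using ideal_cl[OF I _ _ _ a(7)] a by simp
  show ?thesis using 1 2 a unfolding theta_def by auto
qed

lemma theta_cong: assumes I: "ideal I" shows "congruence A m (theta I)"
proof -
  have eq: "equiv A (theta I)"
  proof (rule equivI)
    show "theta I \<subseteq> A \<times> A" unfolding theta_def by auto
    show "refl_on A (theta I)" unfolding refl_on_def theta_def using ideal_z[OF I] by auto
    show "sym (theta I)" unfolding sym_def theta_def by auto
    show "trans (theta I)" unfolding trans_def using theta_trans[OF I] by blast
  qed
  have c: "(x1 \<ominus> x2, y1 \<ominus> y2) \<in> theta I" if h: "(x1, y1) \<in> theta I" "(x2, y2) \<in> theta I" for x1 y1 x2 y2
  proof -
    from h have a: "x1\<in>A" "y1\<in>A" "x2\<in>A" "y2\<in>A" "x1\<ominus>y1\<in>I" "y1\<ominus>x1\<in>I" "x2\<ominus>y2\<in>I" "y2\<ominus>x2\<in>I"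
      unfolding theta_def by auto
    have "(x1\<ominus>x2, y1\<ominus>x2) \<in> theta I"
      using ideal_down[OF I _ a(5) subsub[of x1 y1 x2]] ideal_down[OF I _ a(6) subsub[of y1 x1 x2]] a
      unfolding theta_def by simp
    moreover have "(y1\<ominus>x2, y1\<ominus>y2) \<in> theta I"
      using ideal_down[OF I _ a(8) B1[of y1 x2 y2]] ideal_down[OF I _ a(7) B1[of y1 y2 x2]] a
      unfolding theta_def by simp
    ultimately show ?thesis using theta_trans[OF I] by blast
  qed
  show ?thesis unfolding congruence_def using eq c by blast
qed

definition polar where "polar d = {x\<in>A. meet x d = z}"
lemma polar_ideal: assumes d: "d\<in>A" shows "ideal (polar d)"
  unfolding ideal_def
proof (intro conjI ballI impI)
  show "polar d \<subseteq> A" unfolding polar_def by auto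
  show "z \<in> polar d" unfolding polar_def meet_def using d by simp
  fix x y assume a: "x\<in>A" "y\<in>A" "x \<ominus> y \<in> polar d" "y \<in> polar d"
  define w where "w = meet x d"
  have w: "w\<in>A" "w \<preceq> x" "w \<preceq> d" using a d meet_le1 meet_le2 unfolding w_def by auto
  have "w \<ominus> y \<preceq> x \<ominus> y" using mono1 w a by simp
  moreover have "w \<ominus> y \<preceq> d" using trans_le[OF _ _ _ sub_le[of w y] w(3)] w a d by simp
  ultimately have "w \<ominus> y \<preceq> meet (x \<ominus> y) d" using meet_glb a d w by simp
  hence "w \<preceq> y" using a w unfolding polar_def by simp
  hence "w \<preceq> meet y d" using meet_glb a d w by simp
  hence "w = z" using a w unfolding polar_def by simp
  thus "x \<in> polar d" using a unfolding polar_def w_def by simp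
qed

end

locale sicbck = cbck +
  assumes fin: "finite A" and si: "subdirectly_irreducible A m"
begin

lemma theta_ne: "ideal I \<Longrightarrow> d \<in> I \<Longrightarrow> d \<noteq> z \<Longrightarrow> theta I \<noteq> Id_on A"
proof -
  assume I: "ideal I" "d \<in> I" "d \<noteq> z"
  hence "d \<in> A" unfolding ideal_def by auto
  hence "(d, z) \<in> theta I" using I unfolding theta_def ideal_def by auto
  thus ?thesis using I(3) by auto
qed

lemma ex_c: "\<exists>c\<in>A. c \<noteq> z \<and> (\<forall>I. ideal I \<longrightarrow> (\<exists>d\<in>I. d \<noteq> z) \<longrightarrow> c \<in> I)"
proof -
  obtain \<mu> where mu: "congruence A m \<mu>" "\<mu> \<noteq> Id_on A"
    "\<And>\<theta>. congruence A m \<theta> \<and> \<theta> \<noteq> Id_on A \<Longrightarrow> \<mu> \<subseteq> \<theta>"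
    using si unfolding subdirectly_irreducible_def by blast
  have eq: "equiv A \<mu>" using mu(1) unfolding congruence_def by blast
  have "\<exists>p q. (p,q) \<in> \<mu> \<and> p \<noteq> q"
  proof (rule ccontr)
    assume "\<not> ?thesis"
    hence "\<mu> \<subseteq> Id_on A" using eq unfolding equiv_def by auto
    moreover have "Id_on A \<subseteq> \<mu>" using eq unfolding equiv_def refl_on_def by auto
    ultimately show False using mu(2) by blast
  qed
  then obtain p q where pq: "(p,q) \<in> \<mu>" "p \<noteq> q" by blast
  have pA: "p \<in> A" "q \<in> A" using pq eq unfolding equiv_def by auto
  have key: "p \<ominus> q \<in> I \<and> q \<ominus> p \<in> I" if I: "ideal I" and dI: "\<exists>d\<in>I. d \<noteq> z" for I
  proof -
    obtain d where d: "d \<in> I" "d \<noteq> z" using dI by blast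
    have "congruence A m (theta I) \<and> theta I \<noteq> Id_on A"
      using theta_cong[OF I] theta_ne[OF I d] by (rule conjI)
    hence "\<mu> \<subseteq> theta I" by (rule mu(3))
    thus ?thesis using pq unfolding theta_def by auto
  qed
  show ?thesis
  proof (cases "p \<ominus> q = z")
    case True
    hence "q \<ominus> p \<noteq> z" using B4 pA pq by blast
    thus ?thesis using key pA by (intro bexI[of _ "q \<ominus> p"]) auto
  next
    case False
    thus ?thesis using key pA by (intro bexI[of _ "p \<ominus> q"]) auto
  qed
qed

definition D where "D x = {t\<in>A. t \<preceq> x}"
lemma D_fin[simp]: "finite (D x)" using fin unfolding D_def by auto
lemma D_sub: "x\<in>A \<Longrightarrow> t\<in>A \<Longrightarrow> t \<preceq> x \<Longrightarrow> t \<noteq> x \<Longrightarrow> card (D t) < card (D x)"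
proof -
  assume a: "x\<in>A" "t\<in>A" "t \<preceq> x" "t \<noteq> x"
  have "D t \<subseteq> D x"
  proof
    fix s assume "s \<in> D t" hence s: "s \<in> A" "s \<preceq> t" unfolding D_def by auto
    show "s \<in> D x" using trans_le[OF s(1) a(2) a(1) s(2) a(3)] s(1) unfolding D_def by simp
  qed
  moreover have "x \<in> D x" unfolding D_def using a by simp
  moreover have "x \<notin> D t"
  proof
    assume "x \<in> D t" hence "x \<preceq> t" unfolding D_def by simp
    thus False using B4[OF a(2) a(1) a(3)] a(4) by simp
  qed
  ultimately have "D t \<subset> D x" by blast
  thus ?thesis by (simp add: psubset_card_mono)
qed
lemma D_z: "D z = {z}" unfolding D_def by auto
lemma z_in_D: "x \<in> A \<Longrightarrow> z \<in> D x" unfolding D_def by auto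
lemma x_in_D: "x \<in> A \<Longrightarrow> x \<in> D x" unfolding D_def by auto
lemma card_D_pos: "x \<in> A \<Longrightarrow> 1 \<le> card (D x)"
  using z_in_D[of x] D_fin[of x] by (metis One_nat_def Suc_leI card_gt_0_iff empty_iff)

lemma ex_e: "\<exists>e\<in>A. e \<noteq> z \<and> (\<forall>t\<in>A. t \<noteq> z \<longrightarrow> e \<preceq> t)"
proof -
  obtain c where c: "c\<in>A" "c \<noteq> z" "\<And>I. ideal I \<Longrightarrow> (\<exists>d\<in>I. d \<noteq> z) \<Longrightarrow> c \<in> I"
    using ex_c by blast
  let ?P = "\<lambda>t. t\<in>A \<and> t \<noteq> z \<and> t \<preceq> c"
  have "?P c" using c by simp
  then obtain e where e: "?P e" "\<And>t. ?P t \<Longrightarrow> card (D e) \<le> card (D t)"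
    using ex_has_least_nat[of ?P c "\<lambda>t. card (D t)"] by blast
  have ee: "e \<preceq> t" if t: "t\<in>A" "t \<noteq> z" for t
  proof -
    define w where "w = meet t e"
    have w: "w\<in>A" "w \<preceq> t" "w \<preceq> e" using meet_le1 meet_le2 t e unfolding w_def by auto
    have "w \<noteq> z"
    proof
      assume "w = z"
      hence "t \<in> polar e" unfolding polar_def w_def using t by simp
      hence "c \<in> polar e" using c(3)[OF polar_ideal] e t by blast
      hence "meet c e = z" unfolding polar_def by simp
      moreover have "meet c e = e" using meet_comm[of c e] meet_of_le[of e c] e c by simp
      ultimately show False using e by simp
    qed
    moreover have "w \<preceq> c" using trans_le[OF _ _ _ w(3)] w e c by simp
    ultimately have "?P w" using w by simp
    hence "card (D e) \<le> card (D w)" by (rule e(2))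
    hence "w = e" using D_sub[of e w] w e by fastforce
    thus ?thesis using w by simp
  qed
  have all: "\<forall>t\<in>A. t \<noteq> z \<longrightarrow> e \<preceq> t" using ee by (intro ballI impI)
  have eA: "e \<in> A" using e(1) by (rule conjunct1)
  have en: "e \<noteq> z" using e(1) by (simp only: simp_thms)
  show ?thesis by (rule bexI[of _ e]) (rule conjI[OF en all], rule eA)
qed

definition e where "e = (SOME e. e\<in>A \<and> e \<noteq> z \<and> (\<forall>t\<in>A. t \<noteq> z \<longrightarrow> e \<preceq> t))"
lemma e_all: "e\<in>A \<and> e \<noteq> z \<and> (\<forall>t\<in>A. t \<noteq> z \<longrightarrow> e \<preceq> t)"
proof -
  have "\<exists>x. x\<in>A \<and> x \<noteq> z \<and> (\<forall>t\<in>A. t \<noteq> z \<longrightarrow> x \<preceq> t)" using ex_e by (simp only: Bex_def)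
  thus ?thesis unfolding e_def by (rule someI_ex)
qed
lemma e1: "e\<in>A" using e_all by (rule conjunct1)
lemma e2: "e \<noteq> z" using e_all by (rule conjunct1[OF conjunct2])
lemma e3: "t\<in>A \<Longrightarrow> t \<noteq> z \<Longrightarrow> e \<preceq> t"
proof -
  assume t: "t\<in>A" "t \<noteq> z"
  have "\<forall>t\<in>A. t \<noteq> z \<longrightarrow> e \<preceq> t" using e_all by (rule conjunct2[OF conjunct2])
  thus ?thesis using t by blast
qed
lemmas e = e1 e2 e3

lemma below_pred: "x\<in>A \<Longrightarrow> u\<in>A \<Longrightarrow> u \<preceq> x \<Longrightarrow> u \<noteq> x \<Longrightarrow> u \<preceq> x \<ominus> e"
proof -
  assume a: "x\<in>A" "u\<in>A" "u \<preceq> x" "u \<noteq> x"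
  have "x \<ominus> u \<noteq> z" using a B4 by blast
  hence "e \<preceq> x \<ominus> u" using e a by simp
  hence "x \<ominus> (x \<ominus> u) \<preceq> x \<ominus> e" using anti2 e a by simp
  moreover have "x \<ominus> (x \<ominus> u) = u" using comm[of x u] a by simp
  ultimately show ?thesis by simp
qed

lemma pred_ne: "x\<in>A \<Longrightarrow> x \<noteq> z \<Longrightarrow> x \<ominus> e \<noteq> x"
proof
  assume a: "x\<in>A" "x \<noteq> z" "x \<ominus> e = x"
  have 1: "meet x e = x \<ominus> x" unfolding meet_def using a(3) by simp
  have 2: "x \<ominus> x = z" using a(1) by (rule self)
  have 3: "e \<preceq> x" using e(3)[OF a(1) a(2)] .
  have 4: "meet e x = e" using meet_of_le[OF e(1) a(1) 3] .
  have 5: "meet x e = meet e x" using meet_comm[OF a(1) e(1)] .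
  show False using 1 2 4 5 e(2) by simp
qed

lemma chain: "x\<in>A \<Longrightarrow> u\<in>A \<Longrightarrow> v\<in>A \<Longrightarrow> u \<preceq> x \<Longrightarrow> v \<preceq> x \<Longrightarrow> u \<preceq> v \<or> v \<preceq> u"
proof (induction "card (D x)" arbitrary: x u v rule: less_induct)
  case less
  show ?case
  proof (cases "u = x \<or> v = x")
    case True thus ?thesis using less.prems by auto
  next
    case False
    have x: "x \<noteq> z"
    proof
      assume xz: "x = z"
      have "u \<ominus> z = z" using less.prems(4) xz by simp
      hence "u = z" using less.prems(2) by simp
      thus False using False xz by simp
    qed
    have uv: "u \<preceq> x \<ominus> e" "v \<preceq> x \<ominus> e" using below_pred less.prems False by auto
    have xe: "x \<ominus> e \<in> A" using less.prems(1) e(1) by (rule cl)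
    have "x \<ominus> e \<preceq> x" using less.prems(1) e(1) by (rule sub_le)
    hence "card (D (x \<ominus> e)) < card (D x)"
      using D_sub[OF less.prems(1) xe] pred_ne[OF less.prems(1) x] by blast
    from less.hyps[OF this xe less.prems(2,3) uv] show ?thesis .
  qed
qed

lemma card_formula: assumes a: "x\<in>A" "t\<in>A" "t \<preceq> x"
  shows "card (D (x \<ominus> t)) + card (D t) = card (D x) + 1"
proof -
  define U where "U = {s\<in>A. s \<preceq> x \<and> t \<preceq> s}"
  have "bij_betw (\<lambda>s. x \<ominus> s) U (D (x \<ominus> t))"
  proof (rule bij_betw_imageI)
    show "inj_on (\<lambda>s. x \<ominus> s) U"
    proof (rule inj_onI)
      fix s1 s2 assume h: "s1 \<in> U" "s2 \<in> U" "x \<ominus> s1 = x \<ominus> s2"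
      have "s1 = x \<ominus> (x \<ominus> s1)" using comm[of x s1] h a unfolding U_def by simp
      also have "\<dots> = x \<ominus> (x \<ominus> s2)" using h by simp
      also have "\<dots> = s2" using comm[of x s2] h a unfolding U_def by simp
      finally show "s1 = s2" .
    qed
    show "(\<lambda>s. x \<ominus> s) ` U = D (x \<ominus> t)"
    proof
      show "(\<lambda>s. x \<ominus> s) ` U \<subseteq> D (x \<ominus> t)" unfolding U_def D_def using anti2 a by auto
      show "D (x \<ominus> t) \<subseteq> (\<lambda>s. x \<ominus> s) ` U"
      proof
        fix r assume r: "r \<in> D (x \<ominus> t)"
        hence r': "r\<in>A" "r \<preceq> x \<ominus> t" unfolding D_def by auto
        have rx: "r \<preceq> x" using trans_le[OF _ _ _ r'(2) sub_le] r' a by simp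
        have xr: "x \<ominus> (x \<ominus> r) = r" using comm[of x r] rx r' a by simp
        have xt: "x \<ominus> (x \<ominus> t) = t" using comm[of x t] a by simp
        have "x \<ominus> (x \<ominus> t) \<preceq> x \<ominus> r" using anti2 r' a by simp
        hence "x \<ominus> r \<in> U" unfolding U_def using xt sub_le r' a by simp
        thus "r \<in> (\<lambda>s. x \<ominus> s) ` U" using xr by force
      qed
    qed
  qed
  hence cU: "card U = card (D (x \<ominus> t))" by (rule bij_betw_same_card)
  have un: "D t \<union> U = D x"
  proof
    show "D t \<union> U \<subseteq> D x"
    proof
      fix s assume "s \<in> D t \<union> U"
      hence "s \<in> A \<and> s \<preceq> x"
      proof
        assume "s \<in> D t" hence s: "s\<in>A" "s \<preceq> t" unfolding D_def by auto
        show ?thesis using trans_le[OF s(1) a(2) a(1) s(2) a(3)] s(1) by simp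
      next
        assume "s \<in> U" thus ?thesis unfolding U_def by simp
      qed
      thus "s \<in> D x" unfolding D_def by simp
    qed
    show "D x \<subseteq> D t \<union> U"
    proof
      fix s assume "s \<in> D x"
      hence s: "s\<in>A" "s \<preceq> x" unfolding D_def by auto
      have "s \<preceq> t \<or> t \<preceq> s" using chain[OF a(1) s(1) a(2) s(2) a(3)] .
      thus "s \<in> D t \<union> U" unfolding D_def U_def using s by blast
    qed
  qed
  have int: "D t \<inter> U = {t}"
  proof
    show "D t \<inter> U \<subseteq> {t}"
    proof
      fix s assume "s \<in> D t \<inter> U"
      hence s: "s\<in>A" "s \<preceq> t" "t \<preceq> s" unfolding D_def U_def by auto
      show "s \<in> {t}" using B4[OF s(1) a(2) s(2) s(3)] by simp
    qed
    show "{t} \<subseteq> D t \<inter> U" unfolding D_def U_def using a by simp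
  qed
  have fU: "finite U" using fin unfolding U_def by auto
  have "card (D t) + card U = card (D t \<union> U) + card (D t \<inter> U)"
    using card_Un_Int[OF D_fin fU] by simp
  thus ?thesis using cU un int by simp
qed

end

context sicbck
begin

lemma card_D_ge2: "x\<in>A \<Longrightarrow> x \<noteq> z \<Longrightarrow> 2 \<le> card (D x)"
proof -
  assume a: "x\<in>A" "x \<noteq> z"
  have "{z, x} \<subseteq> D x" using z_in_D[OF a(1)] x_in_D[OF a(1)] by simp
  hence "card {z, x} \<le> card (D x)" by (rule card_mono[OF D_fin])
  thus ?thesis using a(2) by simp
qed

lemma main:
  assumes sub: "subalgebra B A m z" and aB: "a\<in>B" and bB: "b\<in>B"
    and g: "gcd (card (D a) - 1) (card (D b) - 1) = 1"
  shows "downset B A m z"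
proof -
  have BA: "B \<subseteq> A" and zB: "z \<in> B" and Bcl: "\<And>x y. x\<in>B \<Longrightarrow> y\<in>B \<Longrightarrow> x \<ominus> y \<in> B"
    using sub unfolding subalgebra_def by blast+
  have "\<exists>x. x\<in>B \<and> x \<noteq> z"
  proof (rule ccontr)
    assume "\<not> ?thesis"
    hence "a = z" "b = z" using aB bB by blast+
    thus False using g D_z by simp
  qed
  then obtain x0 where x0: "x0\<in>B \<and> x0 \<noteq> z" by blast
  let ?P = "\<lambda>x. x\<in>B \<and> x \<noteq> z"
  obtain d where d: "?P d" and dmin: "\<And>y. ?P y \<Longrightarrow> card (D d) \<le> card (D y)"
    using ex_has_least_nat[of ?P x0 "\<lambda>t. card (D t)"] x0 by blast
  have dB: "d \<in> B" and dz: "d \<noteq> z" using d by auto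
  have dA: "d \<in> A" using dB BA by blast
  have d_le: "d \<preceq> x" if xB: "x\<in>B" and xz: "x \<noteq> z" for x
  proof -
    have xA: "x\<in>A" using xB BA by blast
    define w where "w = meet d x"
    have wB: "w \<in> B" unfolding w_def meet_def using Bcl dB xB by blast
    have wA: "w \<in> A" using wB BA by blast
    have wd: "w \<preceq> d" unfolding w_def by (rule meet_le1[OF dA xA])
    have "e \<preceq> w" unfolding w_def
      using meet_glb[OF dA xA e1 e3[OF dA dz] e3[OF xA xz]] .
    hence wz: "w \<noteq> z" using e2 e1 by auto
    have "card (D d) \<le> card (D w)" using dmin wB wz by blast
    hence "w = d" using D_sub[OF dA wA wd] by linarith
    thus ?thesis using meet_le2[OF dA xA] unfolding w_def by simp
  qed
  have cd2: "2 \<le> card (D d)" using card_D_ge2[OF dA dz] .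
  have dvd: "card (D d) - 1 dvd card (D x) - 1" if "x \<in> B" for x
    using that
  proof (induction "card (D x)" arbitrary: x rule: less_induct)
    case less
    have xA: "x\<in>A" using less.prems BA by blast
    show ?case
    proof (cases "x = z")
      case True thus ?thesis using D_z by simp
    next
      case False
      have dx: "d \<preceq> x" using d_le[OF less.prems False] .
      have xdB: "x \<ominus> d \<in> B" using Bcl less.prems dB by blast
      have xdA: "x \<ominus> d \<in> A" using xdB BA by blast
      have cf: "card (D (x \<ominus> d)) + card (D d) = card (D x) + 1" using card_formula[OF xA dA dx] .
      have "card (D (x \<ominus> d)) < card (D x)" using cf cd2 by linarith
      hence ih: "card (D d) - 1 dvd card (D (x \<ominus> d)) - 1" using less.hyps xdB by blast
      have p1: "1 \<le> card (D (x \<ominus> d))" using card_D_pos[OF xdA] .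
      have "card (D x) - 1 = (card (D (x \<ominus> d)) - 1) + (card (D d) - 1)" using cf p1 cd2 by linarith
      thus ?thesis using ih by simp
    qed
  qed
  have "card (D d) - 1 dvd 1" using dvd[OF aB] dvd[OF bB] g by (metis gcd_greatest)
  hence cd: "card (D d) = 2" using cd2 by simp
  have ed: "e \<preceq> d" using e3[OF dA dz] .
  have "e = d"
  proof (rule ccontr)
    assume ne: "e \<noteq> d"
    have "{z, e, d} \<subseteq> D d" using z_in_D[OF dA] x_in_D[OF dA] e1 ed unfolding D_def by simp
    hence "card {z, e, d} \<le> card (D d)" by (rule card_mono[OF D_fin])
    moreover have "card {z, e, d} = 3" using ne e2 dz by simp
    ultimately show False using cd by simp
  qed
  hence eB: "e \<in> B" using dB by simp
  have down: "y \<in> B" if "x\<in>B" "y\<in>A" "y \<preceq> x" for x y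
    using that
  proof (induction "card (D x)" arbitrary: x y rule: less_induct)
    case less
    have xA: "x\<in>A" using less.prems BA by blast
    show ?case
    proof (cases "y = x")
      case True thus ?thesis using less.prems by simp
    next
      case False
      have xz: "x \<noteq> z"
      proof
        assume xz: "x = z"
        have "y \<ominus> z = z" using less.prems(3) xz by simp
        hence "y = z" using less.prems(2) by simp
        thus False using False xz by simp
      qed
      have yb: "y \<preceq> x \<ominus> e" using below_pred[OF xA less.prems(2) less.prems(3) False] .
      have xeB: "x \<ominus> e \<in> B" using Bcl less.prems(1) eB by blast
      have xeA: "x \<ominus> e \<in> A" using xeB BA by blast
      have "card (D (x \<ominus> e)) < card (D x)"
        using D_sub[OF xA xeA sub_le[OF xA e1] pred_ne[OF xA xz]] .
      thus ?thesis using less.hyps[OF _ xeB less.prems(2) yb] by blast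
    qed
  qed
  show ?thesis unfolding downset_def bck_le_def using down by blast
qed

end

theorem mainTheorem3:
  fixes A B :: "'a set" and m :: "'a \<Rightarrow> 'a \<Rightarrow> 'a" and z :: 'a
  assumes "finite A"
    and "cBCK_algebra A m z"
    and "subdirectly_irreducible A m"
    and "subalgebra B A m z"
    and "\<exists>a\<in>B. \<exists>b\<in>B. gcd (height A m z a) (height A m z b) = 1"
  shows "downset B A m z"
proof -
  interpret sicbck A m z
    by (intro sicbck.intro cbck.intro sicbck_axioms.intro assms(1) assms(2) assms(3))
  have h: "height A m z x = card (D x) - 1" for x
  proof -
    have "{t \<in> A. bck_le m z z t \<and> bck_le m z t x} = D x"
      unfolding D_def bck_le_def by (rule Collect_cong) (use B3 in blast)
    thus ?thesis unfolding height_def by simp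
  qed
  from assms(5) obtain a where aB: "a\<in>B" and ex: "\<exists>b\<in>B. gcd (height A m z a) (height A m z b) = 1"
    by (rule bexE)
  from ex obtain b where bB: "b\<in>B" and g: "gcd (height A m z a) (height A m z b) = 1"
    by (rule bexE)
  have g': "gcd (card (D a) - 1) (card (D b) - 1) = 1" using g unfolding h .
  show ?thesis by (rule main[OF assms(4) aB bB g'])
qed

end
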